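(* Let $(S,\sqcup,\cap)$ be an ado-semilattice and define $a\curlyvee b=(a\sqcup b)\cap(b\sqcup a)$. Then for all $a,b,c,d\in S$: (1) $a\sqcup b=a\curlyvee(a\curlyvee b)$; (2) $\curlyvee$ is commutative and idempotent; (3) $(a\curlyvee b)\sqcup(a\sqcup b)=a\sqcup b$; (4) $a\sqcup(b\curlyvee c)=(a\sqcup b)\curlyvee(a\sqcup c)$; (5) if $d\lesssim a$, $d\lesssim b$, $d\lesssim c$, $d\lesssim a\curlyvee b$ and $d\lesssim b\curlyvee c$, then $d\lesssim a\curlyvee c$.
   Context: An o-semilattice is an algebra $(L,\cap,\sqcup)$ such that $(L,\cap)$ is a semilattice and, with $x\leq y$ iff $x=x\cap y$, for all $x,y,z$: (i) $x\leq x\sqcup y$; (ii) $(x\cap y)\sqcup(y\cap z)\leq y$; (iii) $x\sqcup y\leq x\sqcup(y\cap(x\sqcup y))$; (iv) $x\cap z\leq(x\cap y)\sqcup z$. It is distributive if $(a\cap d)\sqcup((b\cap d)\cap(c\cap d))=((a\cap d)\sqcup(b\cap d))\cap((a\cap d)\sqcup(c\cap d))$ for all $a,b,c,d$. An ado-semilattice is a distributive o-semilattice in which $\sqcup$ is associative. Here $x\lesssim y$ means $y\sqcup x=y$. *)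

theory Defs
  imports Main
begin

definition is_semilattice :: "('a \<Rightarrow> 'a \<Rightarrow> 'a) \<Rightarrow> bool" where
  "is_semilattice m \<longleftrightarrow>
     (\<forall>x y z. m (m x y) z = m x (m y z)) \<and>
     (\<forall>x y. m x y = m y x) \<and>
     (\<forall>x. m x x = x)"

definition sl_le :: "('a \<Rightarrow> 'a \<Rightarrow> 'a) \<Rightarrow> 'a \<Rightarrow> 'a \<Rightarrow> bool" where
  "sl_le m x y \<longleftrightarrow> x = m x y"

definition o_semilattice :: "('a \<Rightarrow> 'a \<Rightarrow> 'a) \<Rightarrow> ('a \<Rightarrow> 'a \<Rightarrow> 'a) \<Rightarrow> bool" where
  "o_semilattice m j \<longleftrightarrow>
     is_semilattice m \<and>
     (\<forall>x y. sl_le m x (j x y)) \<and>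
     (\<forall>x y z. sl_le m (j (m x y) (m y z)) y) \<and>
     (\<forall>x y. sl_le m (j x y) (j x (m y (j x y)))) \<and>
     (\<forall>x y z. sl_le m (m x z) (j (m x y) z))"

definition distributive_o :: "('a \<Rightarrow> 'a \<Rightarrow> 'a) \<Rightarrow> ('a \<Rightarrow> 'a \<Rightarrow> 'a) \<Rightarrow> bool" where
  "distributive_o m j \<longleftrightarrow>
     (\<forall>a b c d. j (m a d) (m (m b d) (m c d)) =
                m (j (m a d) (m b d)) (j (m a d) (m c d)))"

definition ado_semilattice :: "('a \<Rightarrow> 'a \<Rightarrow> 'a) \<Rightarrow> ('a \<Rightarrow> 'a \<Rightarrow> 'a) \<Rightarrow> bool" where
  "ado_semilattice m j \<longleftrightarrow>
     o_semilattice m j \<and> distributive_o m j \<and> (\<forall>x y z. j (j x y) z = j x (j y z))"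

definition lsim :: "('a \<Rightarrow> 'a \<Rightarrow> 'a) \<Rightarrow> 'a \<Rightarrow> 'a \<Rightarrow> bool" where
  "lsim j x y \<longleftrightarrow> j y x = y"

definition curlyvee :: "('a \<Rightarrow> 'a \<Rightarrow> 'a) \<Rightarrow> ('a \<Rightarrow> 'a \<Rightarrow> 'a) \<Rightarrow> 'a \<Rightarrow> 'a \<Rightarrow> 'a" where
  "curlyvee m j a b = m (j a b) (j b a)"

end

theory Submission
  imports Defs
begin

locale ado =
  fixes m j :: "'a \<Rightarrow> 'a \<Rightarrow> 'a"
  assumes ma: "m (m x y) z = m x (m y z)" and mc: "m x y = m y x" and mi: "m x x = x"
  and o1: "x = m x (j x y)"
  and o2: "j (m x y) (m y z) = m (j (m x y) (m y z)) y"
  and o3: "j x y = m (j x y) (j x (m y (j x y)))"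
  and o4: "m x z = m (m x z) (j (m x y) z)"
  and dist: "j (m a d) (m (m b d) (m c d)) = m (j (m a d) (m b d)) (j (m a d) (m c d))"
  and ja: "j (j x y) z = j x (j y z)"
begin
lemma mlc: "m x (m x y) = m x y" by (metis ma mi)
lemma lc: "m x (m y z) = m y (m x z)" by (metis ma mc)
lemmas ac = ma mc lc mi mlc
lemma ji: "j x x = x" by (metis o1 o2 mi mc)
lemma le_j1: "m y x = y \<Longrightarrow> j x y = x" by (metis o1 o2 mi mc ma)
lemma le_j2: "m x y = x \<Longrightarrow> j x y = y" by (metis mc mi o2 o4)
lemma mono2: "m y z = y \<Longrightarrow> m (j x y) (j x z) = j x y" by (smt (verit, best) ma mc o1 o2 o3 o4)
lemma o1': "m x (j x y) = x" by (rule o1[symmetric])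
lemma E: "j x (m y (j x y)) = j x y"
proof -
  have 1: "m (m y (j x y)) y = m y (j x y)" by (simp add: ac)
  have 2: "m (j x (m y (j x y))) (j x y) = j x (m y (j x y))" using mono2[OF 1] .
  have 3: "j x y = m (j x y) (j x (m y (j x y)))" by (rule o3)
  show ?thesis using 2 3 mc[of "j x y" "j x (m y (j x y))"] by simp
qed
lemma L: assumes "m x v = x" "m v (j x y) = v" shows "j x (m y v) = v"
proof -
  let ?d = "j x y"
  have xd: "m x ?d = x" by (rule o1')
  have "j (m x ?d) (m (m y ?d) (m v ?d)) = m (j (m x ?d) (m y ?d)) (j (m x ?d) (m v ?d))" by (rule dist)
  hence 1: "j x (m (m y ?d) v) = m (j x (m y ?d)) (j x v)" using xd assms(2) by simp
  have 2: "j x (m y ?d) = ?d" by (rule E)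
  have 3: "j x v = v" using assms(1) le_j2 by simp
  have 4: "m (m y ?d) v = m y v"
  proof -
    have "m (m y ?d) v = m y (m ?d v)" by (rule ma)
    also have "m ?d v = m v ?d" by (rule mc)
    finally show ?thesis using assms(2) by simp
  qed
  have "j x (m y v) = m ?d v" using 1 2 3 4 by simp
  also have "\<dots> = m v ?d" by (rule mc)
  finally show ?thesis using assms(2) by simp
qed
lemma GD: "j x (m y z) = m (j x y) (j x z)"
proof -
  let ?u = "m (j x y) (j x z)"
  have xu: "m x ?u = x"
  proof -
    have "m x ?u = m (m x (j x y)) (j x z)" by (rule ma[symmetric])
    thus ?thesis by (simp add: o1')
  qed
  have u1: "m ?u (j x y) = ?u" by (simp add: ac)
  have u2: "m ?u (j x z) = ?u" by (simp add: ac)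
  have a: "j x (m y ?u) = ?u" using L[OF xu u1] .
  have b: "j x (m z ?u) = ?u" using L[OF xu u2] .
  have "j (m x ?u) (m (m y ?u) (m z ?u)) = m (j (m x ?u) (m y ?u)) (j (m x ?u) (m z ?u))" by (rule dist)
  hence c0: "j x (m (m y ?u) (m z ?u)) = ?u" using xu a b mi by simp
  have yz: "m (m y ?u) (m z ?u) = m (m y z) ?u" by (simp add: ac)
  have c: "j x (m (m y z) ?u) = ?u" using c0 yz by simp
  have "m (m (m y z) ?u) (m y z) = m (m y z) ?u" by (simp add: ac)
  hence "m (j x (m (m y z) ?u)) (j x (m y z)) = j x (m (m y z) ?u)" by (rule mono2)
  hence le: "m ?u (j x (m y z)) = ?u" using c by simp
  have p1: "m (j x (m y z)) (j x y) = j x (m y z)" by (rule mono2) (simp add: ac)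
  have p2: "m (j x (m y z)) (j x z) = j x (m y z)" by (rule mono2) (simp add: ac)
  have "m (j x (m y z)) ?u = m (m (j x (m y z)) (j x y)) (j x z)" by (rule ma[symmetric])
  also have "\<dots> = j x (m y z)" using p1 p2 by simp
  finally have ge: "m (j x (m y z)) ?u = j x (m y z)" .
  show ?thesis using le ge mc[of "j x (m y z)" ?u] by simp
qed

lemma T2: assumes "m p w = p" "m r w = r" shows "m r (j p r) = r"
proof -
  have 1: "m w r = m (m w r) (j (m w p) r)" by (rule o4)
  have 2: "m w r = r"
  proof -
    have "m w r = m r w" by (rule mc)
    also have "\<dots> = r" by (rule assms(2))
    finally show ?thesis .
  qed
  have 3: "m w p = p"
  proof -
    have "m w p = m p w" by (rule mc)
    also have "\<dots> = p" by (rule assms(1))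
    finally show ?thesis .
  qed
  have "m r (j p r) = m (m w r) (j (m w p) r)" by (simp only: 2 3)
  also have "\<dots> = m w r" by (rule 1[symmetric])
  also have "\<dots> = r" by (rule 2)
  finally show ?thesis .
qed
lemma jcomm: assumes "m p w = p" "m r w = r" shows "j p r = j r p"
proof -
  have a: "m r (j p r) = r" using T2[OF assms(1) assms(2)] .
  have b: "m p (j r p) = p" using T2[OF assms(2) assms(1)] .
  have c: "m p (j p r) = p" by (rule o1')
  have d: "m r (j r p) = r" by (rule o1')
  have "m (j r p) (j p r) = j r p" using o2[of r "j p r" p] a c by (metis mc)
  moreover have "m (j p r) (j r p) = j p r" using o2[of p "j r p" r] b d by (metis mc)
  ultimately show ?thesis by (metis mc)
qed
lemma C3: assumes "j x d = x" "m x y = x" shows "j y d = y"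
proof -
  have 1: "j y x = y" using le_j1 assms(2) by (metis mc)
  have "j y d = j (j y x) d" using 1 by simp
  also have "\<dots> = j y (j x d)" by (rule ja)
  finally show ?thesis using 1 assms(1) by simp
qed
lemma half:
  assumes xw: "m x w = x" and yw: "m y w = y" and xd: "j x d = x" and yd: "j y d = y"
  shows "m (j (m x y) d) x = j (m x y) d"
proof -
  define q where "q = m x y"
  define e where "e = j q d"
  have qx: "m q x = q"
  proof -
    have "m (m x y) x = m x (m y x)" by (rule ma)
    also have "m y x = m x y" by (rule mc)
    finally show ?thesis unfolding q_def using mlc by simp
  qed
  have qy: "m q y = q" unfolding q_def by (simp add: ac)
  have qe: "m q e = q" unfolding e_def by (rule o1')
  have ye: "j y e = y"
  proof -
    have 1: "j y q = y" using le_j1[OF qy] .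
    have "j y e = j (j y q) d" unfolding e_def by (simp only: ja)
    thus ?thesis using 1 yd by simp
  qed
  have xe: "j x e = x"
  proof -
    have 1: "j x q = x" using le_j1[OF qx] .
    have "j x e = j (j x q) d" unfolding e_def by (simp only: ja)
    thus ?thesis using 1 xd by simp
  qed
  define xh where "xh = j e x"
  define x1 where "x1 = m x xh"
  have eq3: "j y x1 = j y x"
  proof -
    have "j y x1 = m (j y x) (j y (j e x))" unfolding x1_def xh_def by (rule GD)
    moreover have "j y (j e x) = j y x" using ye by (simp flip: ja)
    ultimately show ?thesis by (simp add: mi)
  qed
  have qx1: "m q x1 = q"
  proof -
    have ee: "m e (j e x) = e" by (rule o1')
    have "m q x1 = m (m q x) (j e x)" unfolding x1_def xh_def by (simp only: ma)
    also have "\<dots> = m (m q e) (j e x)" using qx qe by simp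
    also have "\<dots> = m q (m e (j e x))" by (simp only: ma)
    also have "\<dots> = q" using ee qe by simp
    finally show ?thesis .
  qed
  have x1x: "m x1 x = x1" unfolding x1_def by (simp add: ac)
  have x1w: "m x1 w = x1"
  proof -
    have "m x1 w = m (m x1 x) w" using x1x by simp
    also have "\<dots> = m x1 (m x w)" by (simp only: ma)
    finally show ?thesis using xw x1x by simp
  qed
  have xyx: "m x (j y x) = x" using T2[OF yw xw] .
  have s1: "x1 = j x1 q" using le_j1[OF qx1] by simp
  have s2: "j x1 q = m (j x1 x) (j x1 y)" unfolding q_def by (rule GD)
  have s3: "j x1 x = x" using le_j2[OF x1x] .
  have s4: "j x1 y = j y x" using jcomm[OF x1w yw] eq3 by simp
  have "x1 = x" using s1 s2 s3 s4 xyx by simp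
  hence xxh: "m x xh = x" unfolding x1_def by simp
  have exh: "m e xh = e" unfolding xh_def by (rule o1[symmetric])
  have "m e (j x e) = e" using T2[OF xxh exh] .
  thus ?thesis using xe unfolding e_def q_def by simp
qed

lemma C2: assumes xw: "m x w = x" and yw: "m y w = y" and xd: "j x d = x" and yd: "j y d = y"
  shows "j (m x y) d = m x y"
proof -
  have ex: "m (j (m x y) d) x = j (m x y) d" using half[OF xw yw xd yd] .
  have ey: "m (j (m x y) d) y = j (m x y) d" using half[OF yw xw yd xd] by (simp add: mc)
  have "m (j (m x y) d) (m x y) = m (m (j (m x y) d) x) y" by (simp only: ma)
  also have "\<dots> = j (m x y) d" using ex ey by simp
  finally have 1: "m (j (m x y) d) (m x y) = j (m x y) d" .
  have 2: "m (m x y) (j (m x y) d) = m x y" by (rule o1[symmetric])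
  show ?thesis using 1 2 mc[of "m x y" "j (m x y) d"] by simp
qed


lemma jjx: "j (j x y) x = j x y"
  by (rule le_j1[OF o1'])

lemma VA: "j a (m (j a b) (j b a)) = j a b"
proof -
  have 1: "j a (j a b) = j a b" using ja[of a a b] ji[of a] by simp
  have 2: "j a (j b a) = j a b" using ja[of a b a] jjx[of a b] by simp
  show ?thesis using GD[of a "j a b" "j b a"] 1 2 mi by simp
qed

lemma Vle1: "m (m (j a b) (j b a)) (j a b) = m (j a b) (j b a)"
  by (simp add: ac)
lemma Vle2: "m (m (j a b) (j b a)) (j b a) = m (j a b) (j b a)"
  by (simp add: ac)

lemma VB: "j (m (j a b) (j b a)) a = j a b"
proof -
  have 1: "m (m (j a b) (j b a)) (j a b) = m (j a b) (j b a)" by (rule Vle1)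
  have 2: "m a (j a b) = a" by (rule o1[symmetric])
  have "j (m (j a b) (j b a)) a = j a (m (j a b) (j b a))" using jcomm[OF 1 2] .
  thus ?thesis using VA by simp
qed

lemma P4: "j a (m (j b c) (j c b)) = m (j (j a b) (j a c)) (j (j a c) (j a b))"
proof -
  have 1: "j (j a b) (j a c) = j a (j b c)" by (metis ja jjx)
  have 2: "j (j a c) (j a b) = j a (j c b)" by (metis ja jjx)
  show ?thesis using GD 1 2 by simp
qed


lemma P5:
  assumes ad: "j a d = a" and bd: "j b d = b" and cd: "j c d = c"
    and abd: "j (m (j a b) (j b a)) d = m (j a b) (j b a)"
    and bcd: "j (m (j b c) (j c b)) d = m (j b c) (j c b)"
  shows "j (m (j a c) (j c a)) d = m (j a c) (j c a)"
proof -
  define V1 where "V1 = m (j a b) (j b a)"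
  define V2 where "V2 = m (j b c) (j c b)"
  have aab: "m a (j a b) = a" by (rule o1[symmetric])
  have bba: "m b (j b a) = b" by (rule o1[symmetric])
  have bbc: "m b (j b c) = b" by (rule o1[symmetric])
  have ccb: "m c (j c b) = c" by (rule o1[symmetric])
  have r1: "j (m a V1) d = m a V1"
    using C2[OF aab Vle1[of a b] ad abd] unfolding V1_def .
  have r2: "j (m b V1) d = m b V1"
    using C2[OF bba Vle2[of a b] bd abd] unfolding V1_def .
  have r3: "j (m b V2) d = m b V2"
    using C2[OF bbc Vle1[of b c] bd bcd] unfolding V2_def .
  have r4: "j (m c V2) d = m c V2"
    using C2[OF ccb Vle2[of b c] cd bcd] unfolding V2_def .
  have v1: "m (m a V1) V1 = m a V1" by (simp add: ac)
  have v1b: "m (m b V1) V1 = m b V1" by (simp add: ac)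
  have r5: "j (m (m a V1) (m b V1)) d = m (m a V1) (m b V1)"
    using C2[OF v1 v1b r1 r2] .
  have v2: "m (m b V2) V2 = m b V2" by (simp add: ac)
  have v2b: "m (m c V2) V2 = m c V2" by (simp add: ac)
  have r6: "j (m (m b V2) (m c V2)) d = m (m b V2) (m c V2)"
    using C2[OF v2 v2b r3 r4] .
  define P where "P = m (m a V1) (m b V1)"
  define Q where "Q = m (m b V2) (m c V2)"
  have Pb: "m P b = P" unfolding P_def by (simp add: ac)
  have Qb: "m Q b = Q" unfolding Q_def by (simp add: ac)
  have r7: "j (m P Q) d = m P Q" using C2[OF Pb Qb r5[folded P_def] r6[folded Q_def]] .
  have PQ: "m (m P Q) (m (j a c) (j c a)) = m P Q"
  proof -
    have Pa: "m P a = P" unfolding P_def by (simp add: ac)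
    have Qc: "m Q c = Q" unfolding Q_def by (simp add: ac)
    have 1: "m P (j a c) = P"
    proof -
      have "m P (j a c) = m (m P a) (j a c)" using Pa by simp
      also have "\<dots> = m P (m a (j a c))" by (rule ma)
      also have "m a (j a c) = a" by (rule o1[symmetric])
      finally show ?thesis using Pa by simp
    qed
    have 2: "m Q (j c a) = Q"
    proof -
      have "m Q (j c a) = m (m Q c) (j c a)" using Qc by simp
      also have "\<dots> = m Q (m c (j c a))" by (rule ma)
      also have "m c (j c a) = c" by (rule o1[symmetric])
      finally show ?thesis using Qc by simp
    qed
    have "m (m P Q) (m (j a c) (j c a)) = m (m P (j a c)) (m Q (j c a))" by (simp add: ac)
    thus ?thesis using 1 2 by simp
  qed
  show ?thesis using C3[OF r7 PQ] .
qed

end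

theorem proposition3p8:
  fixes meet join :: "'a \<Rightarrow> 'a \<Rightarrow> 'a"
  assumes "ado_semilattice meet join"
  defines "V \<equiv> curlyvee meet join"
  shows "(\<forall>a b. join a b = V a (V a b))
       \<and> (\<forall>a b. V a b = V b a) \<and> (\<forall>a. V a a = a)
       \<and> (\<forall>a b. join (V a b) (join a b) = join a b)
       \<and> (\<forall>a b c. join a (V b c) = V (join a b) (join a c))
       \<and> (\<forall>a b c d. lsim join d a \<and> lsim join d b \<and> lsim join d c
                  \<and> lsim join d (V a b) \<and> lsim join d (V b c)
                  \<longrightarrow> lsim join d (V a c))"
proof -
  note S = assms(1)[unfolded ado_semilattice_def o_semilattice_def is_semilattice_def
      sl_le_def distributive_o_def]
  interpret A: ado meet join
    by unfold_locales (insert S, (elim conjE allE), assumption)+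
  have Vd: "V a b = meet (join a b) (join b a)" for a b
    unfolding V_def curlyvee_def by simp
  show ?thesis
  proof (intro conjI allI impI)
    fix a b
    show "join a b = V a (V a b)"
      unfolding Vd using A.VA A.VB A.mi by simp
  next
    fix a b show "V a b = V b a" unfolding Vd by (rule A.mc)
  next
    fix a show "V a a = a" unfolding Vd by (simp add: A.ji A.mi)
  next
    fix a b show "join (V a b) (join a b) = join a b"
      unfolding Vd using A.le_j2[OF A.Vle1] .
  next
    fix a b c show "join a (V b c) = V (join a b) (join a c)"
      unfolding Vd by (rule A.P4)
  next
    fix a b c d
    assume "lsim join d a \<and> lsim join d b \<and> lsim join d c \<and> lsim join d (V a b) \<and> lsim join d (V b c)"
    thus "lsim join d (V a c)" unfolding lsim_def Vd using A.P5 by blast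
  qed
qed

end
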